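(* Let $\mu,\nu$ be probability distributions on a finite set with $\mathrm{supp}\,\mu\subseteq\mathrm{supp}\,\nu$, and let $\epsilon\in[0,1]$. Then \[ D\big((1-\epsilon)\mu+\epsilon\nu\,\big\|\,\nu\big)\le(1-\epsilon)D(\mu\|\nu)-\big(1-\nu(\mathrm{supp}\,\mu)\big)\,\epsilon\log\frac1\epsilon, \] with the convention $0\log\frac10=0$.
   Context: $D(\mu\|\nu)=\sum_{x}\mu(x)\log_2\frac{\mu(x)}{\nu(x)}$ is the Kullback–Leibler divergence; $\mathrm{supp}\,\mu$ is the support of $\mu$ and $\nu(S)=\sum_{x\in S}\nu(x)$. *)

theory Defs
  imports "HOL-Analysis.Analysis"
begin

definition is_distr :: "('a::finite \<Rightarrow> real) \<Rightarrow> bool" where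
  "is_distr p \<longleftrightarrow> (\<forall>x. p x \<ge> 0) \<and> (\<Sum>x\<in>UNIV. p x) = 1"

definition supp :: "('a \<Rightarrow> real) \<Rightarrow> 'a set" where
  "supp p = {x. p x \<noteq> 0}"

text \<open>Kullback--Leibler divergence in bits, with the convention 0 log(0/q) = 0;
  only used when supp mu is contained in supp nu.\<close>
definition KL :: "('a::finite \<Rightarrow> real) \<Rightarrow> ('a \<Rightarrow> real) \<Rightarrow> real" where
  "KL mu nu = (\<Sum>x\<in>supp mu. mu x * log 2 (mu x / nu x))"

definition meas :: "('a::finite \<Rightarrow> real) \<Rightarrow> 'a set \<Rightarrow> real" where
  "meas nu S = (\<Sum>x\<in>S. nu x)"

definition xlog_inv :: "real \<Rightarrow> real" where
  "xlog_inv e = (if e = 0 then 0 else e * log 2 (1 / e))"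

end

theory Submission
  imports Defs
begin

lemma key_ln:
  fixes b e :: real
  assumes "b > 0" "0 \<le> e" "e \<le> 1"
  shows "((1-e)*b+e) * ln ((1-e)*b+e) \<le> (1-e)*b*ln b"
proof (cases "e = 1")
  case True then show ?thesis by simp
next
  case False
  define a where "a = (1-e)*b+e"
  have e1: "e < 1" using False assms by simp
  have apos: "a > 0" unfolding a_def using assms e1
    by (smt (verit) mult_pos_pos)
  have h1: "ln (a/b) \<le> a/b - 1" using ln_le_minus_one apos assms by simp
  have h1': "(1-e)*b*ln (a/b) \<le> (1-e)*b*(a/b - 1)"
    using h1 assms e1 by (intro mult_left_mono) auto
  have h2: "ln a \<le> a - 1" using ln_le_minus_one apos by simp
  have h2': "e * ln a \<le> e*(a-1)" using h2 assms by (intro mult_left_mono) auto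
  have "(1-e)*b*(a/b - 1) = (1-e)*(a-b)" using assms by (simp add: field_simps)
  have lnab: "ln (a/b) = ln a - ln b" using apos assms by (simp add: ln_div)
  have "(1-e)*b*(a/b - 1) + e*(a-1) = 0"
    using assms by (simp add: a_def field_simps)
  have h1'': "(1-e)*b*(ln a - ln b) \<le> (1-e)*b*(a/b - 1)" using h1' lnab by simp
  hence "(1-e)*b*(ln a - ln b) + e*ln a \<le> 0" using h2' \<open>(1-e)*b*(a/b - 1) + e*(a-1) = 0\<close> by linarith
  hence "a * ln a \<le> (1-e)*b*ln b" unfolding a_def by (simp add: algebra_simps)
  thus ?thesis unfolding a_def .
qed

lemma key_log:
  fixes m n e :: real
  assumes "m > 0" "n > 0" "0 \<le> e" "e \<le> 1"
  shows "((1-e)*m+e*n) * log 2 (((1-e)*m+e*n)/n) \<le> (1-e)*(m*log 2 (m/n))"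
proof -
  have k: "((1-e)*(m/n)+e) * ln ((1-e)*(m/n)+e) \<le> (1-e)*(m/n)*ln (m/n)"
    using key_ln[of "m/n" e] assms by simp
  have eq: "((1-e)*m+e*n)/n = (1-e)*(m/n)+e" using assms by (simp add: field_simps)
  have "n * (((1-e)*(m/n)+e) * ln ((1-e)*(m/n)+e)) \<le> n * ((1-e)*(m/n)*ln (m/n))"
    using k assms by (intro mult_left_mono) auto
  moreover have "n * (((1-e)*(m/n)+e) * ln ((1-e)*(m/n)+e)) = ((1-e)*m+e*n) * ln (((1-e)*m+e*n)/n)"
    unfolding eq using assms by (simp add: field_simps)
  moreover have "n * ((1-e)*(m/n)*ln (m/n)) = (1-e)*(m*ln (m/n))"
    using assms by (simp add: field_simps)
  ultimately have "((1-e)*m+e*n) * ln (((1-e)*m+e*n)/n) \<le> (1-e)*(m*ln (m/n))"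
    by simp
  hence "((1-e)*m+e*n) * ln (((1-e)*m+e*n)/n) / ln 2 \<le> (1-e)*(m*ln (m/n)) / ln 2"
    by (intro divide_right_mono) auto
  thus ?thesis by (simp add: log_def)
qed

theorem lemma6:
  fixes mu nu :: "'a::finite \<Rightarrow> real" and \<epsilon> :: real
  assumes "is_distr mu" and "is_distr nu"
    and "supp mu \<subseteq> supp nu"
    and "0 \<le> \<epsilon>" and "\<epsilon> \<le> 1"
  shows "KL (\<lambda>x. (1 - \<epsilon>) * mu x + \<epsilon> * nu x) nu
           \<le> (1 - \<epsilon>) * KL mu nu - (1 - meas nu (supp mu)) * xlog_inv \<epsilon>"
proof (cases "\<epsilon> = 0")
  case True then show ?thesis by (simp add: xlog_inv_def)
next
  case False
  hence ep: "\<epsilon> > 0" using assms by simp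
  define p where "p = (\<lambda>x. (1 - \<epsilon>) * mu x + \<epsilon> * nu x)"
  define S where "S = supp mu"
  define T where "T = supp nu"
  have mu0: "\<And>x. mu x \<ge> 0" and nu0: "\<And>x. nu x \<ge> 0"
    using assms(1,2) by (auto simp: is_distr_def)
  have musum: "(\<Sum>x\<in>UNIV. nu x) = 1" using assms(2) by (auto simp: is_distr_def)
  have ST: "S \<subseteq> T" using assms(3) by (simp add: S_def T_def)
  have suppp: "supp p = T"
  proof
    show "supp p \<subseteq> T"
    proof
      fix x assume "x \<in> supp p"
      hence "p x \<noteq> 0" by (simp add: supp_def)
      moreover have "nu x = 0 \<Longrightarrow> mu x = 0" using ST by (auto simp: S_def T_def supp_def)
      ultimately show "x \<in> T" by (auto simp: T_def supp_def p_def)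
    qed
  next
    show "T \<subseteq> supp p"
    proof
      fix x assume "x \<in> T"
      hence "nu x > 0" using nu0[of x] by (auto simp: T_def supp_def)
      hence "p x > 0" unfolding p_def using ep assms(5) mu0[of x]
        by (smt (verit) mult_nonneg_nonneg mult_pos_pos)
      thus "x \<in> supp p" by (simp add: supp_def)
    qed
  qed
  have split: "KL p nu = (\<Sum>x\<in>S. p x * log 2 (p x / nu x)) + (\<Sum>x\<in>T - S. p x * log 2 (p x / nu x))"
    unfolding KL_def suppp using sum.subset_diff[OF ST finite, of "\<lambda>x. p x * log 2 (p x / nu x)"] by simp
  have A: "(\<Sum>x\<in>S. p x * log 2 (p x / nu x)) \<le> (1 - \<epsilon>) * KL mu nu"
  proof -
    have "(\<Sum>x\<in>S. p x * log 2 (p x / nu x)) \<le> (\<Sum>x\<in>S. (1-\<epsilon>)*(mu x * log 2 (mu x / nu x)))"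
    proof (rule sum_mono)
      fix x assume xS: "x \<in> S"
      hence "mu x > 0" using mu0[of x] by (auto simp: S_def supp_def)
      moreover have "nu x > 0" using xS ST nu0[of x] by (auto simp: T_def supp_def)
      ultimately show "p x * log 2 (p x / nu x) \<le> (1-\<epsilon>)*(mu x * log 2 (mu x / nu x))"
        unfolding p_def using key_log assms(4,5) by blast
    qed
    also have "\<dots> = (1 - \<epsilon>) * KL mu nu" by (simp add: KL_def S_def sum_distrib_left)
    finally show ?thesis .
  qed
  have B: "(\<Sum>x\<in>T - S. p x * log 2 (p x / nu x)) = (\<Sum>x\<in>T - S. nu x) * (\<epsilon> * log 2 \<epsilon>)"
  proof -
    have "(\<Sum>x\<in>T - S. p x * log 2 (p x / nu x)) = (\<Sum>x\<in>T - S. nu x * (\<epsilon> * log 2 \<epsilon>))"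
    proof (rule sum.cong)
      fix x assume "x \<in> T - S"
      hence "mu x = 0" "nu x \<noteq> 0" by (auto simp: S_def T_def supp_def)
      thus "p x * log 2 (p x / nu x) = nu x * (\<epsilon> * log 2 \<epsilon>)" by (simp add: p_def)
    qed simp
    thus ?thesis by (simp add: sum_distrib_right)
  qed
  have C: "(\<Sum>x\<in>T - S. nu x) = 1 - meas nu S"
  proof -
    have "(\<Sum>x\<in>UNIV. nu x) = (\<Sum>x\<in>T. nu x) + (\<Sum>x\<in>UNIV - T. nu x)"
      using sum.subset_diff[OF subset_UNIV finite, of nu T] by simp
    moreover have "(\<Sum>x\<in>UNIV - T. nu x) = 0" by (auto simp: T_def supp_def)
    moreover have "(\<Sum>x\<in>T. nu x) = (\<Sum>x\<in>T - S. nu x) + (\<Sum>x\<in>S. nu x)"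
      using sum.subset_diff[OF ST finite, of nu] by simp
    ultimately show ?thesis using musum by (simp add: meas_def)
  qed
  have D: "xlog_inv \<epsilon> = - (\<epsilon> * log 2 \<epsilon>)"
    using ep by (simp add: xlog_inv_def log_divide)
  show ?thesis
    using split A B C D unfolding p_def[symmetric] S_def[symmetric] by simp
qed

end
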